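(* Let $(X,\rho)$ be a compact metric space, $T\colon X\to X$ continuous, $d\ge2$, and $\lambda$ a non-atomic Borel probability measure on $X$ such that the product measure $\lambda_d$ on $X^d$ is conservative for $T_d=T\times\cdots\times T$. Then the set of $d$-tuples $(x_1,\dots,x_d)$ which are not asymptotic has full $\lambda_d$-measure.
   Context: A $d$-tuple $(x_1,\dots,x_d)$ is asymptotic if $\lim_{n\to\infty}\max_{i,j}\rho(T^n x_i,T^n x_j)=0$. A measure $m$ is conservative for a map $S$ if for every measurable $A$ with $m(A)>0$ there is $n>0$ with $m(A\cap S^n(A))>0$. *)

theory Defs
  imports "HOL-Probability.Probability"
begin

text \<open>The d-fold product map T x ... x T on d-tuples, represented as
  extensional functions on the index set {..<d} (as in the product measure PiM).\<close>
definition prod_map :: "nat \<Rightarrow> ('a \<Rightarrow> 'a) \<Rightarrow> (nat \<Rightarrow> 'a) \<Rightarrow> (nat \<Rightarrow> 'a)" where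
  "prod_map d T x = (\<lambda>i\<in>{..<d}. T (x i))"

definition asymptotic :: "('a::metric_space \<Rightarrow> 'a) \<Rightarrow> nat \<Rightarrow> (nat \<Rightarrow> 'a) \<Rightarrow> bool" where
  "asymptotic T d x \<longleftrightarrow>
     (\<lambda>n. Max {dist ((T ^^ n) (x i)) ((T ^^ n) (x j)) | i j. i < d \<and> j < d}) \<longlonglongrightarrow> 0"

text \<open>Since the forward image S^n(A) need not be measurable,
  "positive measure" is expressed as positive inner measure (it contains a measurable set of
  positive measure); for the (universally measurable) sets arising here this agrees with the
  completed measure.\<close>
definition conservative :: "'b measure \<Rightarrow> ('b \<Rightarrow> 'b) \<Rightarrow> bool" where
  "conservative m S \<longleftrightarrow>
     (\<forall>A \<in> sets m. emeasure m A > 0 \<longrightarrow>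
        (\<exists>n>0. \<exists>B \<in> sets m. B \<subseteq> A \<inter> (S ^^ n) ` A \<and> emeasure m B > 0))"

end

theory Submission
  imports Defs
begin

lemma dense_seq:
  assumes "compact (UNIV :: 'a::metric_space set)"
  shows "\<exists>s::nat \<Rightarrow> 'a. \<forall>y e. 0 < e \<longrightarrow> (\<exists>k. dist y (s k) < e)"
proof -
  have "\<forall>n::nat. \<exists>K. finite K \<and> (UNIV::'a set) \<subseteq> (\<Union>x\<in>K. ball x (1 / real (Suc n)))"
    using assms unfolding compact_eq_totally_bounded by simp
  then obtain K where K: "\<And>n. finite (K n)" "\<And>n. (UNIV::'a set) \<subseteq> (\<Union>x\<in>K n. ball x (1 / real (Suc n)))"
    by metis
  define D where "D = (\<Union>n. K n)"
  have cD: "countable D" unfolding D_def using K(1) by (simp add: countable_finite)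
  obtain x0 where "x0 \<in> K 0" using K(2)[of 0] by blast
  then have nD: "D \<noteq> {}" unfolding D_def by blast
  show ?thesis
  proof (rule exI[of _ "from_nat_into D"], intro allI impI)
    fix y :: 'a and e :: real assume "0 < e"
    then obtain n where n: "1 / real (Suc n) < e" by (rule nat_approx_posE)
    from K(2)[of n] obtain x where x: "x \<in> K n" "y \<in> ball x (1 / real (Suc n))" by blast
    have "x \<in> D" using x unfolding D_def by auto
    then obtain k where "from_nat_into D k = x" using from_nat_into_surj[OF cD] by blast
    then show "\<exists>k. dist y (from_nat_into D k) < e" using x n
      by (metis dist_commute mem_ball order_less_trans)
  qed
qed

lemma dist_char:
  assumes s: "\<forall>y e. 0 < e \<longrightarrow> (\<exists>k. dist y (s k) < e)"
  shows "\<epsilon> < dist a b \<longleftrightarrow> (\<exists>k. \<epsilon> < \<bar>dist a (s k) - dist b (s k)\<bar>)"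
proof
  assume h: "\<epsilon> < dist a b"
  define \<eta> where "\<eta> = (dist a b - \<epsilon>) / 3"
  have ep: "\<eta> > 0" using h unfolding \<eta>_def by simp
  have e3: "3 * \<eta> = dist a b - \<epsilon>" unfolding \<eta>_def by simp
  obtain k where k: "dist b (s k) < \<eta>" using s ep by blast
  have "dist a b \<le> dist a (s k) + dist b (s k)" by (rule dist_triangle2)
  then have "\<epsilon> < dist a (s k) - dist b (s k)" using k h e3 by linarith
  then show "\<exists>k. \<epsilon> < \<bar>dist a (s k) - dist b (s k)\<bar>" by (intro exI[of _ k]) linarith
next
  assume "\<exists>k. \<epsilon> < \<bar>dist a (s k) - dist b (s k)\<bar>"
  then obtain k where k: "\<epsilon> < \<bar>dist a (s k) - dist b (s k)\<bar>" by blast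
  have "dist a (s k) \<le> dist a b + dist b (s k)" by (rule dist_triangle)
  moreover have "dist b (s k) \<le> dist a b + dist a (s k)" by (metis dist_commute dist_triangle)
  ultimately show "\<epsilon> < dist a b" using k by linarith
qed

lemma iter_prod_map:
  "i < d \<Longrightarrow> ((prod_map d T) ^^ k) x i = (T ^^ k) (x i)"
  by (induction k) (auto simp: prod_map_def)

lemma F_shift:
  "Max {dist ((T ^^ n) (((prod_map d T) ^^ k) x i)) ((T ^^ n) (((prod_map d T) ^^ k) x j)) | i j. i < d \<and> j < d}
   = Max {dist ((T ^^ (n + k)) (x i)) ((T ^^ (n + k)) (x j)) | i j. i < d \<and> j < d}"
proof -
  have "\<And>i. i < d \<Longrightarrow> (T ^^ n) (((prod_map d T) ^^ k) x i) = (T ^^ (n + k)) (x i)"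
    by (simp add: iter_prod_map funpow_add)
  then have "{dist ((T ^^ n) (((prod_map d T) ^^ k) x i)) ((T ^^ n) (((prod_map d T) ^^ k) x j)) | i j. i < d \<and> j < d}
   = {dist ((T ^^ (n + k)) (x i)) ((T ^^ (n + k)) (x j)) | i j. i < d \<and> j < d}"
    by (metis (no_types, lifting))
  then show ?thesis by simp
qed

lemma Max_gr:
  fixes g :: "nat \<Rightarrow> nat \<Rightarrow> real"
  assumes "0 < d"
  shows "\<epsilon> < Max {g i j | i j. i < d \<and> j < d} \<longleftrightarrow> (\<exists>i<d. \<exists>j<d. \<epsilon> < g i j)"
proof -
  have eq: "{g i j | i j. i < d \<and> j < d} = (\<lambda>(i,j). g i j) ` ({..<d} \<times> {..<d})" by auto
  have "finite {g i j | i j. i < d \<and> j < d}" unfolding eq by simp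
  moreover have "{g i j | i j. i < d \<and> j < d} \<noteq> {}" using assms by auto
  ultimately show ?thesis by (subst Max_gr_iff) auto
qed

theorem mainTheorem7:
  fixes T :: "'a::metric_space \<Rightarrow> 'a" and M :: "'a measure" and d :: nat
  assumes "compact (UNIV :: 'a set)"
    and "continuous_on UNIV T"
    and "d \<ge> 2"
    and "prob_space M"
    and "sets M = sets borel"
    and "\<And>x. emeasure M {x} = 0"
    and "conservative (PiM {..<d} (\<lambda>_. M)) (prod_map d T)"
  shows "AE x in PiM {..<d} (\<lambda>_. M). \<not> asymptotic T d x"
proof -
  define P where "P = PiM {..<d} (\<lambda>_. M)"
  obtain s :: "nat \<Rightarrow> 'a" where s: "\<forall>y e. 0 < e \<longrightarrow> (\<exists>k. dist y (s k) < e)"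
    using dense_seq[OF assms(1)] by blast
  have Tm: "T \<in> measurable M M"
    using borel_measurable_continuous_onI[OF assms(2)] measurable_cong_sets[OF assms(5) assms(5)] by blast
  have dm: "(\<lambda>a. dist a c) \<in> borel_measurable M" for c :: 'a
  proof -
    have "continuous_on UNIV (\<lambda>a. dist a c)" by (intro continuous_intros)
    then show ?thesis using borel_measurable_continuous_onI measurable_cong_sets[OF assms(5) refl] by blast
  qed
  have hm: "(\<lambda>x. dist ((T ^^ n) (x i)) (s k)) \<in> borel_measurable P" if "i < d" for n i k
  proof -
    have "(\<lambda>x. x i) \<in> measurable P M" unfolding P_def using that measurable_component_singleton[of i "{..<d}" "\<lambda>_. M"] by simp
    moreover have "(T ^^ n) \<in> measurable M M" using Tm by (rule measurable_compose_n)
    ultimately have "(T ^^ n) \<circ> (\<lambda>x. x i) \<in> measurable P M" by (rule measurable_comp)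
    from measurable_comp[OF this dm[of "s k"]] show ?thesis by (simp add: o_def)
  qed
  define g where "g n i j x = dist ((T ^^ n) (x i)) ((T ^^ n) (x j))" for n i j and x :: "nat \<Rightarrow> 'a"
  have hg: "{x\<in>space P. \<epsilon> < g n i j x} \<in> sets P" if "i < d" "j < d" for \<epsilon> n i j
  proof -
    have "{x\<in>space P. \<epsilon> < g n i j x} = (\<Union>k. {x\<in>space P. \<epsilon> < \<bar>dist ((T ^^ n) (x i)) (s k) - dist ((T ^^ n) (x j)) (s k)\<bar>})"
      unfolding g_def using dist_char[OF s] by blast
    also have "\<dots> \<in> sets P"
    proof (intro sets.countable_UN'')
      fix k
      note [measurable] = hm[OF that(1), of n k] hm[OF that(2), of n k]
      show "{x\<in>space P. \<epsilon> < \<bar>dist ((T ^^ n) (x i)) (s k) - dist ((T ^^ n) (x j)) (s k)\<bar>} \<in> sets P"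
        by measurable
    qed simp
    finally show ?thesis .
  qed
  define F where "F n x = Max {dist ((T ^^ n) (x i)) ((T ^^ n) (x j)) | i j. i < d \<and> j < d}" for n and x :: "nat \<Rightarrow> 'a"
  have d0: "0 < d" using assms(3) by simp
  have Fgr: "\<epsilon> < F n x \<longleftrightarrow> (\<exists>i<d. \<exists>j<d. \<epsilon> < g n i j x)" for \<epsilon> n x
    unfolding F_def g_def by (rule Max_gr[OF d0])
  have hF: "{x\<in>space P. \<epsilon> < F n x} \<in> sets P" for \<epsilon> n
  proof -
    have "{x\<in>space P. \<epsilon> < F n x} = (\<Union>i\<in>{..<d}. \<Union>j\<in>{..<d}. {x\<in>space P. \<epsilon> < g n i j x})"
      using Fgr by auto
    also have "\<dots> \<in> sets P" using hg by auto
    finally show ?thesis .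
  qed
  define D where "D \<epsilon> m = {x\<in>space P. \<epsilon> < F m x \<and> (\<forall>n>m. \<not> \<epsilon> < F n x)}" for \<epsilon> m
  have Dm: "D \<epsilon> m \<in> sets P" for \<epsilon> m
  proof -
    have "D \<epsilon> m = {x\<in>space P. \<epsilon> < F m x} \<inter> (\<Inter>n. space P - {x\<in>space P. \<epsilon> < F (n + Suc m) x})"
      unfolding D_def by (auto, metis less_imp_Suc_add add.commute)
    also have "\<dots> \<in> sets P" using hF by auto
    finally show ?thesis .
  qed
  have Dnull: "D \<epsilon> m \<in> null_sets P" for \<epsilon> m
  proof (rule ccontr)
    assume "D \<epsilon> m \<notin> null_sets P"
    then have "emeasure P (D \<epsilon> m) > 0" using Dm by (simp add: null_sets_def zero_less_iff_neq_zero)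
    moreover have "\<forall>A \<in> sets P. emeasure P A > 0 \<longrightarrow>
        (\<exists>n>0. \<exists>B \<in> sets P. B \<subseteq> A \<inter> (prod_map d T ^^ n) ` A \<and> emeasure P B > 0)"
      using assms(7) unfolding conservative_def P_def .
    ultimately have "\<exists>n>0. \<exists>B \<in> sets P. B \<subseteq> D \<epsilon> m \<inter> (prod_map d T ^^ n) ` D \<epsilon> m \<and> emeasure P B > 0"
      using Dm by blast
    then obtain k B where k: "k > 0" "B \<in> sets P" "B \<subseteq> D \<epsilon> m \<inter> (prod_map d T ^^ k) ` D \<epsilon> m"
      "emeasure P B > 0" by blast
    have "D \<epsilon> m \<inter> (prod_map d T ^^ k) ` D \<epsilon> m = {}"
    proof (safe)
      fix x assume x: "x \<in> D \<epsilon> m" "(prod_map d T ^^ k) x \<in> D \<epsilon> m"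
      have "\<epsilon> < F m ((prod_map d T ^^ k) x)" using x(2) unfolding D_def by blast
      then have "\<epsilon> < F (m + k) x" unfolding F_def F_shift .
      moreover have "m + k > m" using k by simp
      ultimately show "(prod_map d T ^^ k) x \<in> {}" using x(1) unfolding D_def by blast
    qed
    then have "B = {}" using k by blast
    then show False using k by simp
  qed
  define \<Delta> where "\<Delta> = {x\<in>space P. x 0 = x 1}"
  have \<Delta>eq: "\<Delta> = space P - {x\<in>space P. 0 < g 0 0 1 x}" unfolding \<Delta>_def g_def by auto
  have \<Delta>m: "\<Delta> \<in> sets P" unfolding \<Delta>eq using hg[of 0 1 0 0] assms(3) by auto
  have \<Delta>null: "\<Delta> \<in> null_sets P"
  proof -
    interpret PP: product_prob_space "\<lambda>_::nat. M"
      using assms(4) by (simp add: product_prob_space_def product_sigma_finite_def prob_space_imp_sigma_finite product_prob_space_axioms_def)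
    have I: "{..<d} = insert 0 {1..<d}" using d0 by auto
    have sp: "space M = UNIV" using sets_eq_imp_space_eq[OF assms(5)] by simp
    have "emeasure P \<Delta> = (\<integral>\<^sup>+x. indicator \<Delta> x \<partial>P)" using \<Delta>m by simp
    also have "\<dots> = (\<integral>\<^sup>+x. (\<integral>\<^sup>+y. indicator \<Delta> (x(0:=y)) \<partial>M) \<partial>PiM {1..<d} (\<lambda>_. M))"
      using \<Delta>m unfolding P_def I by (intro PP.product_nn_integral_insert) auto
    also have "\<dots> = (\<integral>\<^sup>+x. 0 \<partial>PiM {1..<d} (\<lambda>_. M))"
    proof (rule nn_integral_cong)
      fix x assume x: "x \<in> space (PiM {1..<d} (\<lambda>_. M))"
      have "x(0:=y) \<in> space P" for y
        using x d0 unfolding P_def space_PiM sp by (auto simp: PiE_iff extensional_def)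
      then have "indicator \<Delta> (x(0:=y)) = (indicator {x 1} y :: ennreal)" for y
        unfolding \<Delta>_def by (auto simp: indicator_def)
      then have "(\<integral>\<^sup>+y. indicator \<Delta> (x(0:=y)) \<partial>M) = (\<integral>\<^sup>+y. indicator {x 1} y \<partial>M)" by simp
      also have "\<dots> = emeasure M {x 1}"
        using assms(5) by (intro nn_integral_indicator) simp
      also have "\<dots> = 0" using assms(6) .
      finally show "(\<integral>\<^sup>+y. indicator \<Delta> (x(0:=y)) \<partial>M) = 0" .
    qed
    also have "\<dots> = 0" by simp
    finally show ?thesis using \<Delta>m by (simp add: null_sets_def)
  qed
  have cover: "{x\<in>space P. \<not> \<not> asymptotic T d x} \<subseteq> \<Delta> \<union> (\<Union>j. \<Union>m. D (1 / real (Suc j)) m)"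
  proof
    fix x assume x: "x \<in> {x\<in>space P. \<not> \<not> asymptotic T d x}"
    then have xs: "x \<in> space P" and lim: "(\<lambda>n. F n x) \<longlonglongrightarrow> 0"
      unfolding asymptotic_def F_def by auto
    show "x \<in> \<Delta> \<union> (\<Union>j. \<Union>m. D (1 / real (Suc j)) m)"
    proof (cases "x 0 = x 1")
      case True then show ?thesis using xs unfolding \<Delta>_def by auto
    next
      case False
      then have "0 < g 0 0 1 x" unfolding g_def by simp
      then have "0 < F 0 x" using Fgr d0 assms(3) by fastforce
      then obtain j where j: "1 / real (Suc j) < F 0 x" by (rule nat_approx_posE)
      define \<epsilon> where "\<epsilon> = 1 / real (Suc j)"
      have "\<epsilon> > 0" unfolding \<epsilon>_def by simp
      then have "eventually (\<lambda>n. F n x < \<epsilon>) sequentially" using lim by (rule order_tendstoD(2)[rotated])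
      then obtain N where N: "\<And>n. n \<ge> N \<Longrightarrow> F n x < \<epsilon>" unfolding eventually_sequentially by blast
      define S where "S = {n. \<epsilon> < F n x}"
      have "S \<subseteq> {..<N}" unfolding S_def using N by (metis (mono_tags, lifting) less_trans lessThan_iff mem_Collect_eq not_le not_less_iff_gr_or_eq subsetI)
      then have fS: "finite S" by (rule finite_subset) simp
      have "0 \<in> S" unfolding S_def \<epsilon>_def using j by simp
      then have neS: "S \<noteq> {}" by blast
      define m where "m = Max S"
      have "m \<in> S" unfolding m_def using fS neS by simp
      moreover have "\<forall>n>m. n \<notin> S" unfolding m_def using fS Max_ge not_le by blast
      ultimately have "x \<in> D \<epsilon> m" unfolding D_def S_def using xs by auto
      then show ?thesis unfolding \<epsilon>_def by blast
    qed
  qed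
  show ?thesis unfolding P_def[symmetric]
  proof (rule AE_I')
    show "\<Delta> \<union> (\<Union>j. \<Union>m. D (1 / real (Suc j)) m) \<in> null_sets P" using \<Delta>null Dnull by blast
  qed (rule cover)
qed

end
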